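(* Let $n_1,n_2>1$ and let $\mu_j$ ($j=1,2$) be the measure $d\mu_j(r)=r^{n_j-1}dr$ on $[1,\infty)$. Let $\beta'\ge0$, $\alpha'>0$ and define $$R_2(f)(x)=x^{-\alpha'}\int_1^x y^{-\beta'}f(y)\,d\mu_1(y),\qquad x\ge1.$$ Let $1<p<\infty$ with $p'=p/(p-1)$. Then $R_2$ is bounded from $L^{p,1}([1,\infty),d\mu_1)$ to $L^{q,\infty}([1,\infty),d\mu_2)$ provided $$q\ge\begin{cases}\frac{n_2}{\alpha'}, & \text{if } p'\ge\frac{n_1}{\beta'},\\[2pt] \frac{n_2}{\alpha'+\beta'-n_1/p'}, & \text{if } p'<\frac{n_1}{\beta'},\end{cases}$$ where $n_1/\beta'$ is interpreted as $+\infty$ when $\beta'=0$.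
   Context: Lorentz spaces on a measure space $(X,\mu)$: for measurable $f$, $d_f(s)=\mu(\{|f|>s\})$, $f^*(t)=\inf\{s>0:d_f(s)\le t\}$, $\|f\|_{(p,1)}=\int_0^\infty t^{1/p}f^*(t)\frac{dt}{t}$ and $\|f\|_{(q,\infty)}=\sup_{t>0}t^{1/q}f^*(t)$; $L^{p,1}$ and $L^{q,\infty}$ are the spaces where these quantities are finite. *)

theory Defs
  imports "HOL-Analysis.Analysis"
begin

text \<open>The measure d mu(r) = r^(n-1) dr on [1,infinity), realised on the real line
  (the complement of [1,infinity) is a null set).\<close>
definition radial_measure :: "real \<Rightarrow> real measure" where
  "radial_measure n = density lborel (\<lambda>r. indicator {1..} r * ennreal (r powr (n - 1)))"

definition distfun :: "'a measure \<Rightarrow> ('a \<Rightarrow> real) \<Rightarrow> real \<Rightarrow> ennreal" where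
  "distfun M f s = emeasure M {x \<in> space M. \<bar>f x\<bar> > s}"

text \<open>Decreasing rearrangement f*(t) = inf {s > 0. d_f(s) \<le> t} (inf of the empty set is infinity).\<close>
definition rearr :: "'a measure \<Rightarrow> ('a \<Rightarrow> real) \<Rightarrow> real \<Rightarrow> ennreal" where
  "rearr M f t = Inf {ennreal s | s. s > 0 \<and> distfun M f s \<le> ennreal t}"

definition lorentz_p1 :: "'a measure \<Rightarrow> real \<Rightarrow> ('a \<Rightarrow> real) \<Rightarrow> ennreal" where
  "lorentz_p1 M p f = (\<integral>\<^sup>+ t \<in> {0<..}. ennreal (t powr (1 / p) / t) * rearr M f t \<partial>lborel)"

definition lorentz_qinf :: "'a measure \<Rightarrow> real \<Rightarrow> ('a \<Rightarrow> real) \<Rightarrow> ennreal" where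
  "lorentz_qinf M q f = (SUP t \<in> {0<..}. ennreal (t powr (1 / q)) * rearr M f t)"

definition R2 :: "real \<Rightarrow> real \<Rightarrow> real \<Rightarrow> (real \<Rightarrow> real) \<Rightarrow> real \<Rightarrow> real" where
  "R2 n1 \<alpha>' \<beta>' f x = x powr (- \<alpha>') * (LINT y:{1..x}|radial_measure n1. y powr (- \<beta>') * f y)"

end

theory Submission
  imports Defs
begin

definition wt :: "real \<Rightarrow> real \<Rightarrow> real" where
  "wt n r = indicator {1..} r * r powr (n - 1)"

lemma wt_nonneg: "0 \<le> wt n r" by (simp add: wt_def)

lemma wt_meas[measurable]: "wt n \<in> borel_measurable borel"
  unfolding wt_def by measurable

lemma radial_eq: "radial_measure n = density lborel (\<lambda>r. ennreal (wt n r))"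
  unfolding radial_measure_def wt_def
  by (intro arg_cong[where f="density lborel"] ext) (auto simp: indicator_def)

lemma space_radial[simp]: "space (radial_measure n) = UNIV"
  by (simp add: radial_eq)

lemma sets_radial[simp]: "sets (radial_measure n) = sets borel"
  by (simp add: radial_eq)

lemma meas_radial_iff[simp]: "(f \<in> borel_measurable (radial_measure n)) = (f \<in> borel_measurable borel)"
  by (simp add: radial_eq)

lemma nn_int_radial:
  "g \<in> borel_measurable borel \<Longrightarrow> integral\<^sup>N (radial_measure n) g = (\<integral>\<^sup>+x. ennreal (wt n x) * g x \<partial>lborel)"
  unfolding radial_eq by (subst nn_integral_density) auto

lemma distfun_radial:
  assumes [measurable]: "f \<in> borel_measurable borel"
  shows "distfun (radial_measure n) f s = (\<integral>\<^sup>+x. ennreal (wt n x) * indicator {x. s < \<bar>f x\<bar>} x \<partial>lborel)"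
  unfolding distfun_def radial_eq by (subst emeasure_density) auto

lemma distfun_meas[measurable]:
  assumes [measurable]: "f \<in> borel_measurable borel"
  shows "(\<lambda>s. distfun (radial_measure n) f s) \<in> borel_measurable borel"
  unfolding distfun_radial[OF assms] by measurable

lemma FTC_powr:
  assumes "0 < a" "1 \<le> r"
  shows "(\<integral>\<^sup>+y. ennreal (y powr (a - 1)) * indicator {1..r} y \<partial>lborel) = ennreal ((r powr a - 1) / a)"
proof -
  have "(\<integral>\<^sup>+y. ennreal (y powr (a - 1)) * indicator {1..r} y \<partial>lborel) = (r powr a / a) - (1 powr a / a)"
  proof (rule nn_integral_FTC_Icc)
    fix x :: real assume x: "x \<in> {1..r}"
    show "((\<lambda>y. y powr a / a) has_real_derivative x powr (a - 1)) (at x)"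
      using x assms by (auto intro!: derivative_eq_intros simp: field_simps)
  qed (use assms in auto)
  then show ?thesis by (simp add: diff_divide_distrib)
qed

lemma pw1: "0 < (mr::real) \<Longrightarrow> mr \<le> 1 \<Longrightarrow> 1 < p \<Longrightarrow> mr \<le> mr powr (1/p)"
  by (smt (verit, ccfv_SIG) divide_le_eq_1_pos powr_mono' powr_one_gt_zero_iff)
lemma pw2: "1 \<le> (t::real) \<Longrightarrow> a \<le> 0 \<Longrightarrow> t powr a \<le> 1"
  using powr_mono[of a 0 t] by simp

definition phi :: "real \<Rightarrow> ennreal \<Rightarrow> ennreal" where
  "phi p d = (if d = top then top else ennreal (enn2real d powr (1/p)))"

lemma lemB:
  fixes n p :: real and E :: "real set"
  assumes n: "0 < n" and p: "1 < p" and E[measurable]: "E \<in> sets borel"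
  shows "(\<integral>\<^sup>+y. ennreal (wt n y * y powr (-(n - n/p))) * indicator E y \<partial>lborel)
     \<le> ennreal (1 + p/n) * phi p (\<integral>\<^sup>+y. ennreal (wt n y) * indicator E y \<partial>lborel)"
proof -
  define b where "b = n - n/p"
  define m where "m = (\<integral>\<^sup>+y. ennreal (wt n y) * indicator E y \<partial>lborel)"
  have "n / p < n" using n p by (simp add: divide_less_eq)
  then have b0: "0 < b" unfolding b_def by simp
  have np: "0 < n / p" using n p by simp
  have C1: "1 \<le> 1 + p/n" using n p by simp
  have LHSeq: "(\<integral>\<^sup>+y. ennreal (wt n y * y powr (-(n - n/p))) * indicator E y \<partial>lborel)
     = (\<integral>\<^sup>+y. ennreal (wt n y * y powr (-b) * indicator E y) \<partial>lborel)"
    unfolding b_def by (intro nn_integral_cong) (auto simp: indicator_def)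
  have meq: "m = (\<integral>\<^sup>+y. ennreal (wt n y * indicator E y) \<partial>lborel)"
    unfolding m_def by (intro nn_integral_cong) (auto simp: indicator_def)
  show ?thesis
  proof (cases "m = top")
    case True
    then show ?thesis using C1 unfolding phi_def m_def[symmetric]
      by (simp add: ennreal_mult_top)
  next
    case False
    then obtain mr where mr: "m = ennreal mr" "0 \<le> mr" by (cases m) auto
    have phim: "phi p m = ennreal (mr powr (1/p))" using mr by (simp add: phi_def)
    show ?thesis
    proof (cases "mr \<le> 1")
      case True
      have "(\<integral>\<^sup>+y. ennreal (wt n y * y powr (-b) * indicator E y) \<partial>lborel)
          \<le> (\<integral>\<^sup>+y. ennreal (wt n y * indicator E y) \<partial>lborel)"
      proof (intro nn_integral_mono ennreal_leI)
        fix y :: real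
        show "wt n y * y powr (-b) * indicator E y \<le> wt n y * indicator E y"
        proof (cases "1 \<le> y")
          case True
          have "y powr (-b) \<le> 1" using True b0
            by (intro pw2) auto
          then show ?thesis using wt_nonneg[of n y]
            by (auto simp: indicator_def intro: mult_left_le)
        qed (auto simp: wt_def)
      qed
      also have "\<dots> = ennreal mr" using meq mr by simp
      also have "\<dots> \<le> ennreal (mr powr (1/p))"
      proof (rule ennreal_leI)
        show "mr \<le> mr powr (1/p)"
        proof (cases "mr = 0")
          case False
          then have "0 < mr" using mr by simp
          then show ?thesis using True p
            by (intro pw1) auto
        qed simp
      qed
      also have "\<dots> \<le> ennreal ((1 + p/n) * mr powr (1/p))"
        using mult_right_mono[OF C1, of "mr powr (1/p)"] by (intro ennreal_leI) simp
      finally show ?thesis unfolding LHSeq m_def[symmetric] phim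
        using C1 by (simp add: ennreal_mult)
    next
      case False
      then have mr1: "1 < mr" by simp
      define r where "r = mr powr (1/n)"
      have r1: "1 \<le> r" unfolding r_def using mr1 n by (intro ge_one_powr_ge_zero) auto
      have ptw: "wt n y * y powr (-b) * indicator E y
          \<le> r powr (-b) * (wt n y * indicator E y) + y powr (n/p - 1) * indicator {1..r} y" for y
      proof (cases "1 \<le> y")
        case True
        have eq: "wt n y * y powr (-b) = y powr (n/p - 1)"
          using True by (simp add: wt_def b_def flip: powr_add)
        show ?thesis
        proof (cases "y \<le> r")
          case True
          then show ?thesis using eq \<open>1 \<le> y\<close> wt_nonneg[of n y]
            by (auto simp: indicator_def)
        next
          case False
          have "y powr (-b) \<le> r powr (-b)"
            using False r1 b0 by (intro powr_mono2') auto
          then have "wt n y * y powr (-b) * indicator E y \<le> r powr (-b) * (wt n y * indicator E y)"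
            using wt_nonneg[of n y]
            by (auto simp: indicator_def mult.commute intro: mult_left_mono)
          then show ?thesis using False by (auto simp: indicator_def)
        qed
      qed (auto simp: wt_def)
      have "(\<integral>\<^sup>+y. ennreal (wt n y * y powr (-b) * indicator E y) \<partial>lborel)
          \<le> (\<integral>\<^sup>+y. ennreal (r powr (-b)) * ennreal (wt n y * indicator E y)
                 + ennreal (y powr (n/p - 1)) * indicator {1..r} y \<partial>lborel)"
      proof (intro nn_integral_mono)
        fix y :: real
        have "ennreal (wt n y * y powr (-b) * indicator E y) \<le> ennreal (r powr (-b) * (wt n y * indicator E y) + y powr (n/p - 1) * indicator {1..r} y)"
          by (rule ennreal_leI[OF ptw])
        also have "\<dots> = ennreal (r powr (-b)) * ennreal (wt n y * indicator E y) + ennreal (y powr (n/p - 1)) * indicator {1..r} y"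
          using wt_nonneg[of n y] by (auto simp: indicator_def ennreal_plus ennreal_mult)
        finally show "ennreal (wt n y * y powr (-b) * indicator E y) \<le> ennreal (r powr (-b)) * ennreal (wt n y * indicator E y) + ennreal (y powr (n/p - 1)) * indicator {1..r} y" .
      qed
      also have "\<dots> = ennreal (r powr (-b)) * m + ennreal ((r powr (n/p) - 1) / (n/p))"
        unfolding meq
        by (subst nn_integral_add) (auto simp: nn_integral_cmult FTC_powr[OF np r1])
      also have "\<dots> = ennreal (r powr (-b) * mr + (r powr (n/p) - 1) / (n/p))"
      proof -
        define Q where "Q = (r powr (n/p) - 1) / (n/p)"
        have h1: "0 \<le> Q" unfolding Q_def using np ge_one_powr_ge_zero[OF r1, of "n/p"]
          by (intro divide_nonneg_pos) auto
        have h2: "0 \<le> r powr (-b) * mr" using mr by simp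
        have "ennreal (r powr (-b)) * m = ennreal (r powr (-b) * mr)" using mr by (simp add: ennreal_mult)
        then show ?thesis unfolding Q_def[symmetric] using ennreal_plus[OF h2 h1] by simp
      qed
      also have "\<dots> \<le> ennreal ((1 + p/n) * mr powr (1/p))"
      proof (rule ennreal_leI)
        have ex: "1/n * (-(n - n/p)) = 1/p - 1" using n by (simp add: field_simps)
        have "r powr (-b) = mr powr (1/n * (-(n - n/p)))" unfolding r_def b_def by (simp add: powr_powr)
        then have "r powr (-b) = mr powr (1/p - 1)" unfolding ex .
        then have "r powr (-b) * mr = mr powr (1/p - 1) * mr powr 1" using mr1 by simp
        also have "\<dots> = mr powr (1/p - 1 + 1)" by (rule powr_add[symmetric])
        also have "\<dots> = mr powr (1/p)" by simp
        finally have e1: "r powr (-b) * mr = mr powr (1/p)" .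
        have e2: "r powr (n/p) = mr powr (1/p)"
          using mr1 n unfolding r_def by (simp add: powr_powr)
        have "(r powr (n/p) - 1) / (n/p) \<le> (p/n) * mr powr (1/p)"
          using e2 n p by (simp add: field_simps)
        then show "r powr (-b) * mr + (r powr (n/p) - 1) / (n/p) \<le> (1 + p/n) * mr powr (1/p)"
          using e1 by (simp add: distrib_right)
      qed
      finally show ?thesis unfolding LHSeq m_def[symmetric] phim
        using C1 by (simp add: ennreal_mult)
    qed
  qed
qed

lemma phi_meas[measurable (raw)]:
  assumes g[measurable]: "g \<in> borel_measurable M"
  shows "(\<lambda>x. phi p (g x)) \<in> borel_measurable M"
proof -
  have s: "{x \<in> space M. g x = top} \<in> sets M"
  proof -
    have "g -` {top} \<inter> space M \<in> sets M" by (rule measurable_sets[OF g]) simp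
    moreover have "g -` {top} \<inter> space M = {x \<in> space M. g x = top}" by auto
    ultimately show ?thesis by simp
  qed
  have e: "(\<lambda>x. ennreal (enn2real (g x) powr (1/p))) \<in> borel_measurable M"
  proof -
    have "(\<lambda>x. enn2real (g x) powr (1/p)) \<in> borel_measurable M" by simp
    then show ?thesis by (rule measurable_compose[OF _ measurable_ennreal])
  qed
  show ?thesis unfolding phi_def
    by (rule measurable_If[OF _ e s]) simp
qed

lemma powr_div_anti:
  fixes t N p :: real
  assumes "1 < p" "0 < t" "t \<le> N"
  shows "N powr (1/p) / N \<le> t powr (1/p) / t"
proof -
  have "N powr (1/p) / N = N powr (1/p - 1)" "t powr (1/p) / t = t powr (1/p - 1)"
    using assms by (simp_all add: powr_diff)
  moreover have "N powr (1/p - 1) \<le> t powr (1/p - 1)"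
    using assms by (intro powr_mono2') auto
  ultimately show ?thesis by simp
qed

lemma G:
  assumes p: "1 < p" and N: "0 < N" and Nd: "ennreal N \<le> d"
  shows "ennreal (N powr (1/p)) \<le> (\<integral>\<^sup>+t. ennreal (t powr (1/p) / t) * indicator {t. 0 < t \<and> ennreal t < d} t \<partial>lborel)"
proof -
  have "ennreal (N powr (1/p)) = ennreal (N powr (1/p) / N) * ennreal N"
    using N by (simp add: ennreal_mult[symmetric])
  also have "ennreal N = emeasure lborel {0<..<N}" using N by simp
  also have "ennreal (N powr (1/p) / N) * emeasure lborel {0<..<N}
      = (\<integral>\<^sup>+t. ennreal (N powr (1/p) / N) * indicator {0<..<N} t \<partial>lborel)"
    by (simp add: nn_integral_cmult_indicator)
  also have "\<dots> \<le> (\<integral>\<^sup>+t. ennreal (t powr (1/p) / t) * indicator {t. 0 < t \<and> ennreal t < d} t \<partial>lborel)"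
  proof (intro nn_integral_mono)
    fix t :: real
    show "ennreal (N powr (1/p) / N) * indicator {0<..<N} t
        \<le> ennreal (t powr (1/p) / t) * indicator {t. 0 < t \<and> ennreal t < d} t"
    proof (cases "0 < t \<and> t < N")
      case True
      then have "ennreal t < d" using Nd
        by (metis ennreal_less_iff less_le_trans less_imp_le)
      moreover have "N powr (1/p) / N \<le> t powr (1/p) / t"
        using True p by (intro powr_div_anti) auto
      ultimately show ?thesis using True by (auto simp: indicator_def intro: ennreal_leI)
    qed (auto simp: indicator_def)
  qed
  finally show ?thesis .
qed

lemma phi_le:
  assumes p: "1 < p"
  shows "phi p d \<le> (\<integral>\<^sup>+t. ennreal (t powr (1/p) / t) * indicator {t. 0 < t \<and> ennreal t < d} t \<partial>lborel)"
    (is "_ \<le> ?I")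
proof (cases d rule: ennreal_cases)
  case (real dr)
  show ?thesis
  proof (cases "dr = 0")
    case True then show ?thesis using real by (simp add: phi_def)
  next
    case False
    then have "0 < dr" using real by simp
    then show ?thesis using real G[OF p \<open>0 < dr\<close>, of d] by (simp add: phi_def)
  qed
next
  case top
  have "?I = top"
  proof (rule ccontr)
    assume "?I \<noteq> top"
    then obtain c where c: "?I = ennreal c" "0 \<le> c" by (cases ?I) auto
    define N where "N = (c + 1) powr p"
    have N0: "0 < N" using c unfolding N_def by simp
    have "N powr (1/p) = c + 1" unfolding N_def using c p by (simp add: powr_powr)
    then have "ennreal (c + 1) \<le> ennreal c" using G[OF p N0, of d] top c by simp
    then show False using c by simp
  qed
  then show ?thesis by simp
qed

lemma distfun_mono:
  assumes f[measurable]: "f \<in> borel_measurable M" and "s' \<le> s"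
  shows "distfun M f s \<le> distfun M f s'"
  unfolding distfun_def using assms(2) by (intro emeasure_mono) auto

lemma S_le_rearr:
  assumes f[measurable]: "f \<in> borel_measurable M"
  shows "(\<integral>\<^sup>+s. indicator {s. 0 < s \<and> ennreal t < distfun M f s} s \<partial>lborel) \<le> rearr M f t"
proof -
  have sub: "ennreal s \<le> rearr M f t" if s: "0 < s" "ennreal t < distfun M f s" for s
    unfolding rearr_def
  proof (rule Inf_greatest)
    fix u assume "u \<in> {ennreal s' |s'. 0 < s' \<and> distfun M f s' \<le> ennreal t}"
    then obtain s' where u: "u = ennreal s'" "0 < s'" "distfun M f s' \<le> ennreal t" by auto
    have "s \<le> s'"
    proof (rule ccontr)
      assume "\<not> s \<le> s'"
      then have "distfun M f s \<le> distfun M f s'" by (intro distfun_mono[OF f]) auto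
      then show False using u s by auto
    qed
    then show "ennreal s \<le> u" using u by (simp add: ennreal_leI)
  qed
  show ?thesis
  proof (cases "rearr M f t" rule: ennreal_cases)
    case (real r)
    have "(\<integral>\<^sup>+s. indicator {s. 0 < s \<and> ennreal t < distfun M f s} s \<partial>lborel)
        \<le> (\<integral>\<^sup>+s. indicator {0<..r} s \<partial>lborel)"
    proof (intro nn_integral_mono)
      fix s :: real
      show "indicator {s. 0 < s \<and> ennreal t < distfun M f s} s \<le> (indicator {0<..r} s :: ennreal)"
        using sub[of s] real by (auto simp: indicator_def ennreal_le_iff)
    qed
    also have "\<dots> = ennreal r" using real by simp
    finally show ?thesis using real by simp
  qed simp
qed

lemma L3:
  fixes M :: "'a measure"
  assumes p: "1 < p" and f[measurable]: "f \<in> borel_measurable M"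
    and D[measurable]: "(\<lambda>s. distfun M f s) \<in> borel_measurable borel"
  shows "(\<integral>\<^sup>+s. indicator {0<..} s * phi p (distfun M f s) \<partial>lborel) \<le> lorentz_p1 M p f"
proof -
  define K where "K = (\<lambda>s t. indicator {0<..} s * (ennreal (t powr (1/p) / t) * indicator {t. 0 < t \<and> ennreal t < distfun M f s} t) :: ennreal)"
  have Km[measurable]: "case_prod K \<in> borel_measurable (lborel \<Otimes>\<^sub>M lborel)"
    unfolding K_def by measurable
  have "(\<integral>\<^sup>+s. indicator {0<..} s * phi p (distfun M f s) \<partial>lborel)
      \<le> (\<integral>\<^sup>+s. \<integral>\<^sup>+t. K s t \<partial>lborel \<partial>lborel)"
  proof (intro nn_integral_mono)
    fix s :: real
    have "(\<integral>\<^sup>+t. K s t \<partial>lborel) = indicator {0<..} s *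
       (\<integral>\<^sup>+t. ennreal (t powr (1/p) / t) * indicator {t. 0 < t \<and> ennreal t < distfun M f s} t \<partial>lborel)"
      unfolding K_def by (rule nn_integral_cmult) measurable
    then show "indicator {0<..} s * phi p (distfun M f s) \<le> (\<integral>\<^sup>+t. K s t \<partial>lborel)"
      using phi_le[OF p] by (simp add: mult_left_mono)
  qed
  also have "\<dots> = (\<integral>\<^sup>+t. \<integral>\<^sup>+s. K s t \<partial>lborel \<partial>lborel)"
    by (rule lborel_pair.Fubini') (unfold K_def, measurable)
  also have "\<dots> \<le> (\<integral>\<^sup>+t. ennreal (t powr (1/p) / t) * rearr M f t * indicator {0<..} t \<partial>lborel)"
  proof (intro nn_integral_mono)
    fix t :: real
    have "(\<integral>\<^sup>+s. K s t \<partial>lborel) = (\<integral>\<^sup>+s. (ennreal (t powr (1/p) / t) * indicator {0<..} t) *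
         indicator {s. 0 < s \<and> ennreal t < distfun M f s} s \<partial>lborel)"
      unfolding K_def by (intro nn_integral_cong) (auto simp: indicator_def)
    also have "\<dots> = (ennreal (t powr (1/p) / t) * indicator {0<..} t) *
         (\<integral>\<^sup>+s. indicator {s. 0 < s \<and> ennreal t < distfun M f s} s \<partial>lborel)"
      by (rule nn_integral_cmult) measurable
    also have "\<dots> \<le> (ennreal (t powr (1/p) / t) * indicator {0<..} t) * rearr M f t"
      by (intro mult_left_mono S_le_rearr[OF f]) auto
    finally show "(\<integral>\<^sup>+s. K s t \<partial>lborel) \<le> ennreal (t powr (1/p) / t) * rearr M f t * indicator {0<..} t"
      by (simp add: ac_simps)
  qed
  also have "\<dots> = lorentz_p1 M p f" unfolding lorentz_p1_def by simp
  finally show ?thesis .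
qed

lemma lemL:
  assumes n: "0 < n" and p: "1 < p" and f[measurable]: "f \<in> borel_measurable borel"
  shows "(\<integral>\<^sup>+y. ennreal (wt n y * y powr (-(n - n/p))) * ennreal \<bar>f y\<bar> \<partial>lborel)
     \<le> ennreal (1 + p/n) * lorentz_p1 (radial_measure n) p f"
proof -
  define h where "h y = wt n y * y powr (-(n - n/p))" for y
  have hm[measurable]: "h \<in> borel_measurable borel" unfolding h_def by measurable
  define K where "K = (\<lambda>y s. ennreal (h y) * (if 0 < s \<and> s < \<bar>f y\<bar> then 1 else 0))"
  have Km1[measurable]: "case_prod K \<in> borel_measurable (lborel \<Otimes>\<^sub>M lborel)"
    unfolding K_def by measurable
  have Km2[measurable]: "(\<lambda>(s, y). K y s) \<in> borel_measurable (lborel \<Otimes>\<^sub>M lborel)"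
    unfolding K_def by measurable
  have abs_eq: "ennreal \<bar>f y\<bar> = (\<integral>\<^sup>+s. (if 0 < s \<and> s < \<bar>f y\<bar> then 1 else 0) \<partial>lborel)" for y
  proof -
    have "(\<integral>\<^sup>+s. (if 0 < s \<and> s < \<bar>f y\<bar> then 1 else 0) \<partial>lborel) = (\<integral>\<^sup>+s. indicator {0<..<\<bar>f y\<bar>} s \<partial>lborel)"
      by (intro nn_integral_cong) (auto simp: indicator_def)
    also have "\<dots> = ennreal \<bar>f y\<bar>" by simp
    finally show ?thesis by simp
  qed
  have "(\<integral>\<^sup>+y. ennreal (h y) * ennreal \<bar>f y\<bar> \<partial>lborel) = (\<integral>\<^sup>+y. \<integral>\<^sup>+s. K y s \<partial>lborel \<partial>lborel)"
  proof (intro nn_integral_cong)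
    fix y
    show "ennreal (h y) * ennreal \<bar>f y\<bar> = (\<integral>\<^sup>+s. K y s \<partial>lborel)"
      unfolding abs_eq K_def by (rule nn_integral_cmult[symmetric]) measurable
  qed
  also have "\<dots> = (\<integral>\<^sup>+s. \<integral>\<^sup>+y. K y s \<partial>lborel \<partial>lborel)"
    by (rule lborel_pair.Fubini') measurable
  also have "\<dots> \<le> (\<integral>\<^sup>+s. ennreal (1 + p/n) * (indicator {0<..} s * phi p (distfun (radial_measure n) f s)) \<partial>lborel)"
  proof (intro nn_integral_mono)
    fix s :: real
    show "(\<integral>\<^sup>+y. K y s \<partial>lborel) \<le> ennreal (1 + p/n) * (indicator {0<..} s * phi p (distfun (radial_measure n) f s))"
    proof (cases "0 < s")
      case True
      have "(\<integral>\<^sup>+y. K y s \<partial>lborel) = (\<integral>\<^sup>+y. ennreal (wt n y * y powr (-(n - n/p))) * indicator {y. s < \<bar>f y\<bar>} y \<partial>lborel)"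
        unfolding K_def h_def using True by (intro nn_integral_cong) (auto simp: indicator_def)
      also have "\<dots> \<le> ennreal (1 + p/n) * phi p (\<integral>\<^sup>+y. ennreal (wt n y) * indicator {y. s < \<bar>f y\<bar>} y \<partial>lborel)"
        by (rule lemB[OF n p]) measurable
      also have "\<dots> = ennreal (1 + p/n) * (indicator {0<..} s * phi p (distfun (radial_measure n) f s))"
        using True by (simp add: distfun_radial[OF f])
      finally show ?thesis .
    next
      case False
      then have "(\<integral>\<^sup>+y. K y s \<partial>lborel) = 0" unfolding K_def by simp
      then show ?thesis by simp
    qed
  qed
  also have "\<dots> = ennreal (1 + p/n) * (\<integral>\<^sup>+s. indicator {0<..} s * phi p (distfun (radial_measure n) f s) \<partial>lborel)"
    by (rule nn_integral_cmult) measurable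
  also have "\<dots> \<le> ennreal (1 + p/n) * lorentz_p1 (radial_measure n) p f"
    by (intro mult_left_mono L3[OF p]) auto
  finally show ?thesis unfolding h_def by simp
qed

lemma R2_int_bound:
  fixes n1 p x e \<beta>' :: real
  assumes n1: "0 < n1" and p: "1 < p" and f[measurable]: "f \<in> borel_measurable borel"
    and e: "0 \<le> e"
    and ptw: "\<And>y. 1 \<le> y \<Longrightarrow> y \<le> x \<Longrightarrow> y powr (-\<beta>') \<le> x powr e * y powr (-(n1 - n1/p))"
    and fin: "lorentz_p1 (radial_measure n1) p f < top"
  shows "\<bar>LINT y:{1..x}|radial_measure n1. y powr (-\<beta>') * f y\<bar>
     \<le> x powr e * ((1 + p/n1) * enn2real (lorentz_p1 (radial_measure n1) p f))"
proof -
  define L where "L = lorentz_p1 (radial_measure n1) p f"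
  define g where "g y = indicator {1..x} y *\<^sub>R (y powr (-\<beta>') * f y)" for y
  have gm[measurable]: "g \<in> borel_measurable borel" unfolding g_def by measurable
  have I: "(LINT y:{1..x}|radial_measure n1. y powr (-\<beta>') * f y) = integral\<^sup>L (radial_measure n1) g"
    unfolding set_lebesgue_integral_def g_def by simp
  have "ennreal \<bar>integral\<^sup>L (radial_measure n1) g\<bar> \<le> (\<integral>\<^sup>+y. ennreal (norm (g y)) \<partial>radial_measure n1)"
  proof (cases "integrable (radial_measure n1) g")
    case True
    then show ?thesis using integral_norm_bound_ennreal[OF True] by simp
  next
    case False
    then show ?thesis by (simp add: not_integrable_integral_eq)
  qed
  also have "\<dots> = (\<integral>\<^sup>+y. ennreal (wt n1 y) * ennreal (norm (g y)) \<partial>lborel)"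
    by (rule nn_int_radial) measurable
  also have "\<dots> \<le> (\<integral>\<^sup>+y. ennreal (x powr e) * (ennreal (wt n1 y * y powr (-(n1 - n1/p))) * ennreal \<bar>f y\<bar>) \<partial>lborel)"
  proof (intro nn_integral_mono)
    fix y :: real
    have "wt n1 y * norm (g y) \<le> x powr e * (wt n1 y * y powr (-(n1 - n1/p)) * \<bar>f y\<bar>)"
    proof (cases "1 \<le> y \<and> y \<le> x")
      case True
      have "wt n1 y * norm (g y) = wt n1 y * (y powr (-\<beta>') * \<bar>f y\<bar>)"
        using True by (simp add: g_def abs_mult)
      also have "\<dots> \<le> wt n1 y * ((x powr e * y powr (-(n1 - n1/p))) * \<bar>f y\<bar>)"
        using ptw[of y] True wt_nonneg[of n1 y]
        by (intro mult_left_mono mult_right_mono) auto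
      finally show ?thesis by (simp add: ac_simps)
    next
      case False
      then have "g y = 0" unfolding g_def indicator_def by auto
      then show ?thesis using wt_nonneg[of n1 y] by simp
    qed
    then have "ennreal (wt n1 y * norm (g y)) \<le> ennreal (x powr e * (wt n1 y * y powr (-(n1 - n1/p)) * \<bar>f y\<bar>))"
      by (rule ennreal_leI)
    then show "ennreal (wt n1 y) * ennreal (norm (g y))
        \<le> ennreal (x powr e) * (ennreal (wt n1 y * y powr (-(n1 - n1/p))) * ennreal \<bar>f y\<bar>)"
      using wt_nonneg[of n1 y] by (simp add: ennreal_mult)
  qed
  also have "\<dots> = ennreal (x powr e) * (\<integral>\<^sup>+y. ennreal (wt n1 y * y powr (-(n1 - n1/p))) * ennreal \<bar>f y\<bar> \<partial>lborel)"
    by (rule nn_integral_cmult) measurable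
  also have "\<dots> \<le> ennreal (x powr e) * (ennreal (1 + p/n1) * L)"
    unfolding L_def by (intro mult_left_mono lemL[OF n1 p f]) auto
  also have "\<dots> = ennreal (x powr e * ((1 + p/n1) * enn2real L))"
  proof -
    have "L = ennreal (enn2real L)" using fin unfolding L_def by simp
    then show ?thesis using n1 p by (simp add: ennreal_mult ennreal_mult' ac_simps)
  qed
  finally have "ennreal \<bar>integral\<^sup>L (radial_measure n1) g\<bar> \<le> ennreal (x powr e * ((1 + p/n1) * enn2real L))" .
  moreover have "0 \<le> x powr e * ((1 + p/n1) * enn2real L)" using n1 p by simp
  ultimately show ?thesis unfolding I L_def[symmetric] by (simp add: ennreal_le_iff)
qed

lemma lemQ:
  fixes n2 \<gamma> q A :: real and F :: "real \<Rightarrow> real"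
  assumes n2: "1 < n2" and g: "0 < \<gamma>" and q: "n2 / \<gamma> \<le> q" and A: "0 \<le> A"
    and F[measurable]: "F \<in> borel_measurable borel"
    and bnd: "\<And>x. \<bar>F x\<bar> \<le> (if 1 \<le> x then A * x powr (-\<gamma>) else 0)"
  shows "lorentz_qinf (radial_measure n2) q F \<le> ennreal A"
proof -
  have q0: "0 < q" using q n2 g by (smt (verit) divide_pos_pos)
  have qg: "1/q \<le> \<gamma>/n2"
  proof -
    have "1/q \<le> 1/(n2/\<gamma>)"
      by (rule divide_left_mono) (use q q0 n2 g in \<open>auto intro!: mult_pos_pos divide_pos_pos\<close>)
    then show ?thesis by simp
  qed
  show ?thesis unfolding lorentz_qinf_def
  proof (rule SUP_least)
    fix t :: real assume "t \<in> {0<..}"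
    then have t0: "0 < t" by simp
    define s0 where "s0 = (if t \<le> 1 then A else A * t powr (-\<gamma>/n2))"
    have s00: "0 \<le> s0" unfolding s0_def using A by simp
    have dist: "distfun (radial_measure n2) F s \<le> ennreal t" if s: "s0 < s" for s
    proof -
      have s0': "0 < s" using s s00 by simp
      have deq: "distfun (radial_measure n2) F s = (\<integral>\<^sup>+x. ennreal (wt n2 x) * indicator {x. s < \<bar>F x\<bar>} x \<partial>lborel)"
        by (rule distfun_radial[OF F])
      show ?thesis
      proof (cases "A \<le> s")
        case True
        have "(\<integral>\<^sup>+x. ennreal (wt n2 x) * indicator {x. s < \<bar>F x\<bar>} x \<partial>lborel) = (\<integral>\<^sup>+(x::real). 0 \<partial>lborel)"
        proof (intro nn_integral_cong)
          fix x :: real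
          have "\<bar>F x\<bar> \<le> s"
          proof (cases "1 \<le> x")
            case True
            have "x powr (-\<gamma>) \<le> 1" using True g by (intro pw2) auto
            then have "A * x powr (-\<gamma>) \<le> A" using A by (simp add: mult_left_le)
            then show ?thesis using bnd[of x] True \<open>A \<le> s\<close> by simp
          next
            case False
            then show ?thesis using bnd[of x] s0' by simp
          qed
          then show "ennreal (wt n2 x) * indicator {x. s < \<bar>F x\<bar>} x = 0"
            by (simp add: indicator_def)
        qed
        then show ?thesis using deq by simp
      next
        case False
        then have t1: "1 < t" using s unfolding s0_def by (auto split: if_splits)
        then have s0eq: "s0 = A * t powr (-\<gamma>/n2)" unfolding s0_def by simp
        define R where "R = t powr (1/n2)"
        have R1: "1 \<le> R" unfolding R_def using t1 n2 by (intro ge_one_powr_ge_zero) auto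
        have RR: "R powr (-\<gamma>) = t powr (-\<gamma>/n2)" unfolding R_def using t0 by (simp add: powr_powr)
        have "(\<integral>\<^sup>+x. ennreal (wt n2 x) * indicator {x. s < \<bar>F x\<bar>} x \<partial>lborel)
            \<le> (\<integral>\<^sup>+x. ennreal (R powr (n2 - 1)) * indicator {1..R} x \<partial>lborel)"
        proof (intro nn_integral_mono)
          fix x :: real
          show "ennreal (wt n2 x) * indicator {x. s < \<bar>F x\<bar>} x \<le> ennreal (R powr (n2 - 1)) * indicator {1..R} x"
          proof (cases "s < \<bar>F x\<bar>")
            case True
            have x1: "1 \<le> x"
            proof (rule ccontr)
              assume "\<not> 1 \<le> x" then show False using bnd[of x] True s0' by simp
            qed
            have sx: "s < A * x powr (-\<gamma>)" using bnd[of x] True x1 by simp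
            have xR: "x \<le> R"
            proof (rule ccontr)
              assume "\<not> x \<le> R"
              then have "x powr (-\<gamma>) \<le> R powr (-\<gamma>)" using R1 g by (intro powr_mono2') auto
              then have "A * x powr (-\<gamma>) \<le> s0" unfolding s0eq RR[symmetric] using A by (simp add: mult_left_mono)
              then show False using sx s by simp
            qed
            have "wt n2 x \<le> R powr (n2 - 1)"
              unfolding wt_def using x1 xR n2 by (simp add: powr_mono2)
            then show ?thesis using True x1 xR by (simp add: indicator_def ennreal_leI)
          qed (simp add: indicator_def)
        qed
        also have "\<dots> = ennreal (R powr (n2 - 1)) * ennreal (R - 1)"
          using R1 by (simp add: nn_integral_cmult_indicator)
        also have "\<dots> \<le> ennreal (R powr (n2 - 1) * R)"
          using R1 by (simp add: ennreal_mult[symmetric] ennreal_leI)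
        also have "R powr (n2 - 1) * R = t"
        proof -
          have "R powr (n2 - 1) * R = R powr (n2 - 1) * R powr 1" using R1 by simp
          also have "\<dots> = R powr (n2 - 1 + 1)" by (rule powr_add[symmetric])
          also have "\<dots> = t" unfolding R_def using t0 n2 by (simp add: powr_powr)
          finally show ?thesis .
        qed
        finally show ?thesis using deq by simp
      qed
    qed
    have key: "rearr (radial_measure n2) F t \<le> ennreal s0"
    proof (rule dense_ge)
      fix u assume u: "ennreal s0 < u"
      show "rearr (radial_measure n2) F t \<le> u"
      proof (cases u rule: ennreal_cases)
        case (real s)
        then have ss: "s0 < s" using u s00 by (simp add: ennreal_less_iff)
        have "ennreal s \<in> {ennreal s |s. 0 < s \<and> distfun (radial_measure n2) F s \<le> ennreal t}"
          using ss s00 dist[OF ss] by auto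
        then show ?thesis unfolding rearr_def real by (rule Inf_lower)
      qed simp
    qed
    have "ennreal (t powr (1/q)) * rearr (radial_measure n2) F t \<le> ennreal (t powr (1/q)) * ennreal s0"
      by (intro mult_left_mono key) auto
    also have "\<dots> = ennreal (t powr (1/q) * s0)" using s00 by (simp add: ennreal_mult)
    also have "\<dots> \<le> ennreal A"
    proof (rule ennreal_leI)
      show "t powr (1/q) * s0 \<le> A"
      proof (cases "t \<le> 1")
        case True
        have "t powr (1/q) \<le> 1" using True t0 q0 by (intro powr_le1) auto
        then show ?thesis using True A unfolding s0_def by (simp add: mult_left_le_one_le)
      next
        case False
        have "t powr (1/q) * s0 = A * (t powr (1/q) * t powr (-\<gamma>/n2))"
          using False unfolding s0_def by (simp add: ac_simps)
        also have "t powr (1/q) * t powr (-\<gamma>/n2) = t powr (1/q - \<gamma>/n2)"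
          by (simp add: powr_add[symmetric])
        also have "t powr (1/q - \<gamma>/n2) \<le> 1" using False qg by (intro pw2) auto
        then have "A * t powr (1/q - \<gamma>/n2) \<le> A" using A by (simp add: mult_left_le)
        finally show ?thesis .
      qed
    qed
    finally show "ennreal (t powr (1/q)) * rearr (radial_measure n2) F t \<le> ennreal A" .
  qed
qed

lemma R2_meas:
  assumes f[measurable]: "f \<in> borel_measurable borel"
  shows "R2 n1 \<alpha>' \<beta>' f \<in> borel_measurable borel"
proof -
  define G where "G = (\<lambda>x y. wt n1 y * ((if 1 \<le> y \<and> y \<le> x then 1 else 0) * (y powr (-\<beta>') * f y)))"
  have Gm: "case_prod G \<in> borel_measurable (borel \<Otimes>\<^sub>M lborel)" unfolding G_def by measurable
  have eq: "R2 n1 \<alpha>' \<beta>' f x = x powr (-\<alpha>') * (\<integral>y. G x y \<partial>lborel)" for x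
  proof -
    have "(LINT y:{1..x}|radial_measure n1. y powr (-\<beta>') * f y)
        = (\<integral>y. indicator {1..x} y *\<^sub>R (y powr (-\<beta>') * f y) \<partial>density lborel (\<lambda>r. ennreal (wt n1 r)))"
      unfolding set_lebesgue_integral_def radial_eq ..
    also have "\<dots> = (\<integral>y. wt n1 y *\<^sub>R (indicator {1..x} y *\<^sub>R (y powr (-\<beta>') * f y)) \<partial>lborel)"
      by (rule integral_density) (auto simp: wt_nonneg)
    also have "\<dots> = (\<integral>y. G x y \<partial>lborel)"
      unfolding G_def by (intro Bochner_Integration.integral_cong) (auto simp: indicator_def)
    finally show ?thesis unfolding R2_def by simp
  qed
  have "(\<lambda>x. \<integral>y. G x y \<partial>lborel) \<in> borel_measurable borel"
    by (rule lborel.borel_measurable_lebesgue_integral[OF Gm])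
  then show ?thesis unfolding eq[abs_def] by measurable
qed

theorem lemma2p4:
  fixes n1 n2 \<alpha>' \<beta>' p q :: real
  assumes "n1 > 1" and "n2 > 1"
    and "\<beta>' \<ge> 0" and "\<alpha>' > 0"
    and "1 < p"
    and "if \<beta>' > 0 \<and> p / (p - 1) \<ge> n1 / \<beta>'
         then q \<ge> n2 / \<alpha>'
         else (\<alpha>' + \<beta>' - n1 / (p / (p - 1)) > 0 \<and> q \<ge> n2 / (\<alpha>' + \<beta>' - n1 / (p / (p - 1))))"
  shows "\<exists>C::real. \<forall>f. f \<in> borel_measurable (radial_measure n1)
            \<and> lorentz_p1 (radial_measure n1) p f < \<infinity> \<longrightarrow>
           R2 n1 \<alpha>' \<beta>' f \<in> borel_measurable (radial_measure n2)
           \<and> lorentz_qinf (radial_measure n2) q (R2 n1 \<alpha>' \<beta>' f)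
               \<le> ennreal C * lorentz_p1 (radial_measure n1) p f"
proof -
  note n1 = assms(1) and n2 = assms(2) and bt = assms(3) and al = assms(4) and p = assms(5)
    and cond = assms(6)
  define b where "b = n1 - n1/p"
  have n1p: "n1 / (p / (p - 1)) = b" unfolding b_def using p by (simp add: field_simps)
  have p'0: "0 < p / (p - 1)" using p by simp
  have "n1/p < n1" using n1 p by (simp add: divide_less_eq)
  then have b0: "0 < b" unfolding b_def by simp
  obtain e \<gamma> where e0: "0 \<le> e" and g0: "0 < \<gamma>" and qg: "n2 / \<gamma> \<le> q" and ge: "\<gamma> = \<alpha>' - e"
    and ptw: "\<And>x y. 1 \<le> y \<Longrightarrow> y \<le> x \<Longrightarrow> y powr (-\<beta>') \<le> x powr e * y powr (-b)"
  proof (cases "\<beta>' > 0 \<and> p / (p - 1) \<ge> n1 / \<beta>'")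
    case True
    then have q: "n2 / \<alpha>' \<le> q" using cond by simp
    have "n1 / \<beta>' * \<beta>' \<le> p / (p - 1) * \<beta>'" using True by (intro mult_right_mono) auto
    then have n1le: "n1 \<le> p / (p - 1) * \<beta>'" using True by simp
    have "b = n1 / (p / (p - 1))" using n1p by simp
    also have "\<dots> \<le> (p / (p - 1) * \<beta>') / (p / (p - 1))"
      by (rule divide_right_mono[OF n1le]) (use p'0 in simp)
    also have "\<dots> = \<beta>'" using p'0 p by simp
    finally have "b \<le> \<beta>'" .
    show ?thesis
    proof (rule that[of 0 \<alpha>'])
      fix x y :: real assume y: "1 \<le> y" "y \<le> x"
      have "y powr (-\<beta>') \<le> y powr (-b)" using y \<open>b \<le> \<beta>'\<close> by (intro powr_mono) auto
      then show "y powr (-\<beta>') \<le> x powr 0 * y powr (-b)" using y by simp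
    qed (use al q in auto)
  next
    case False
    then have c: "\<alpha>' + \<beta>' - b > 0" "n2 / (\<alpha>' + \<beta>' - b) \<le> q" using cond n1p by auto
    have "\<beta>' \<le> b"
    proof (cases "\<beta>' = 0")
      case False
      then have "\<beta>' > 0" using bt by simp
      then have "p / (p - 1) < n1 / \<beta>'" using \<open>\<not> (\<beta>' > 0 \<and> p / (p - 1) \<ge> n1 / \<beta>')\<close> by simp
      then have hh: "p / (p - 1) * \<beta>' < n1" using \<open>\<beta>' > 0\<close> by (simp add: less_divide_eq)
      have "\<beta>' = (p / (p - 1) * \<beta>') / (p / (p - 1))" using p'0 p by simp
      also have "\<dots> < n1 / (p / (p - 1))" by (rule divide_strict_right_mono[OF hh p'0])
      finally have "\<beta>' < n1 / (p / (p - 1))" .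
      then show ?thesis using n1p by simp
    qed (use b0 in simp)
    show ?thesis
    proof (rule that[of "b - \<beta>'" "\<alpha>' + \<beta>' - b"])
      fix x y :: real assume y: "1 \<le> y" "y \<le> x"
      have "y powr (-\<beta>') = y powr (b - \<beta>') * y powr (-b)" using y by (simp flip: powr_add)
      also have "\<dots> \<le> x powr (b - \<beta>') * y powr (-b)"
        using y \<open>\<beta>' \<le> b\<close> by (intro mult_right_mono powr_mono2) auto
      finally show "y powr (-\<beta>') \<le> x powr (b - \<beta>') * y powr (-b)" .
    qed (use c \<open>\<beta>' \<le> b\<close> in auto)
  qed
  show ?thesis
  proof (intro exI[of _ "1 + p/n1"] allI impI)
    fix f :: "real \<Rightarrow> real"
    assume asm: "f \<in> borel_measurable (radial_measure n1) \<and> lorentz_p1 (radial_measure n1) p f < \<infinity>"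
    then have f[measurable]: "f \<in> borel_measurable borel" and fin: "lorentz_p1 (radial_measure n1) p f < top"
      by auto
    define L where "L = lorentz_p1 (radial_measure n1) p f"
    define A where "A = (1 + p/n1) * enn2real L"
    have A0: "0 \<le> A" unfolding A_def using n1 p by simp
    have bnd: "\<bar>R2 n1 \<alpha>' \<beta>' f x\<bar> \<le> (if 1 \<le> x then A * x powr (-\<gamma>) else 0)" for x
    proof (cases "1 \<le> x")
      case True
      have I: "\<bar>LINT y:{1..x}|radial_measure n1. y powr (-\<beta>') * f y\<bar> \<le> x powr e * A"
        unfolding A_def L_def
        by (rule R2_int_bound[OF _ p f e0 _ fin]) (use n1 ptw b_def in auto)
      have "\<bar>R2 n1 \<alpha>' \<beta>' f x\<bar> = x powr (-\<alpha>') * \<bar>LINT y:{1..x}|radial_measure n1. y powr (-\<beta>') * f y\<bar>"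
        unfolding R2_def by (simp add: abs_mult)
      also have "\<dots> \<le> x powr (-\<alpha>') * (x powr e * A)" by (intro mult_left_mono I) simp
      also have "\<dots> = A * (x powr (-\<alpha>') * x powr e)" by (simp add: ac_simps)
      also have "x powr (-\<alpha>') * x powr e = x powr (-\<gamma>)" unfolding ge by (simp flip: powr_add)
      finally show ?thesis using True by simp
    next
      case False
      then have "{1..x} = {}" by auto
      then show ?thesis using False unfolding R2_def set_lebesgue_integral_def by simp
    qed
    have "lorentz_qinf (radial_measure n2) q (R2 n1 \<alpha>' \<beta>' f) \<le> ennreal A"
      by (rule lemQ[OF n2 g0 qg A0 R2_meas[OF f] bnd])
    also have "ennreal A = ennreal (1 + p/n1) * L"
    proof -
      have "L = ennreal (enn2real L)" using fin unfolding L_def by simp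
      then show ?thesis unfolding A_def using n1 p by (simp add: ennreal_mult)
    qed
    finally show "R2 n1 \<alpha>' \<beta>' f \<in> borel_measurable (radial_measure n2)
           \<and> lorentz_qinf (radial_measure n2) q (R2 n1 \<alpha>' \<beta>' f)
               \<le> ennreal (1 + p/n1) * lorentz_p1 (radial_measure n1) p f"
      unfolding L_def using R2_meas[OF f] by simp
  qed
qed

end
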